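(* Let $\sigma$ be an erasing $k$-block substitution with $w_\epsilon\ne1^k$ that satisfies the optimality condition. Then for every $x\in\mathbb I$ the fiber $f_\sigma^{-1}(x)$ is uncountable.
   Context: Notation: $\mathbb I=[0,1]$. $\{0,1\}^*$ and $\{0,1\}^\omega$ denote finite and infinite binary words, and $\epsilon$ is the empty word. For a word $w$, set $0.w=\sum_iw_i2^{-i}$. For $x\in(0,1]$, $\widetilde x$ is the unique infinite binary expansion of $x$ not ending in $0^\infty$. Fix $k\ge2$. An erasing $k$-block substitution is a map $\sigma:\{0,1\}^k\to\{0,1\}^*$ with exactly one block $w_\epsilon$ such that $\sigma(w_\epsilon)=\epsilon$. It acts blockwise on infinite words, concatenating the images of consecutive $k$-blocks. The map $f_\sigma:\mathbb I\to\mathbb I$ is defined by $f_\sigma(x)=0.\sigma(\widetilde x)$ if $x\in(0,1]$ and $\widetilde x\neq w_\epsilon^\infty$, and $f_\sigma(x)=0$ otherwise. Optimality condition: every $w\in\{0,1\}^\omega$ can be written as $w=\prod_{i\ge1}\sigma(b_i)$ with blocks $b_i\in\{0,1\}^k$ satisfying $\sigma(b_i)\ne\epsilon$. *)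

theory Defs
  imports Complex_Main "HOL-Library.Countable_Set"
begin

text \<open>Finite binary words are \<open>bool list\<close> (True = 1, False = 0);
infinite binary words are \<open>nat \<Rightarrow> bool\<close>, letter i of the paper is position i-1 here.\<close>

definition bval :: "(nat \<Rightarrow> bool) \<Rightarrow> real" where
  "bval u = (\<Sum>n. (if u n then 1 else 0) / 2 ^ Suc n)"

definition binexp :: "real \<Rightarrow> (nat \<Rightarrow> bool)" where
  "binexp x = (THE u. (\<forall>n. \<exists>m\<ge>n. u m) \<and> bval u = x)"

text \<open>Concatenation of a sequence of finite words. If the concatenation is a finite
word, it is padded with zeros (which does not change its binary value 0.w).\<close>
definition concat_word :: "(nat \<Rightarrow> bool list) \<Rightarrow> (nat \<Rightarrow> bool)" where
  "concat_word ws n =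
     (if \<exists>m. n < length (concat (map ws [0..<m]))
      then concat (map ws [0..<(LEAST m. n < length (concat (map ws [0..<m])))]) ! n
      else False)"

definition block :: "nat \<Rightarrow> (nat \<Rightarrow> bool) \<Rightarrow> nat \<Rightarrow> bool list" where
  "block k u i = map (\<lambda>j. u (k * i + j)) [0..<k]"

definition subst_inf :: "nat \<Rightarrow> (bool list \<Rightarrow> bool list) \<Rightarrow> (nat \<Rightarrow> bool) \<Rightarrow> (nat \<Rightarrow> bool)" where
  "subst_inf k \<sigma> u = concat_word (\<lambda>i. \<sigma> (block k u i))"

text \<open>sigma (only its values on words of length k matter) is an erasing k-block substitution.\<close>
definition erasing_block_subst :: "nat \<Rightarrow> (bool list \<Rightarrow> bool list) \<Rightarrow> bool" where
  "erasing_block_subst k \<sigma> \<longleftrightarrow> k \<ge> 2 \<and> (\<exists>!w. length w = k \<and> \<sigma> w = [])"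

definition w_eps :: "nat \<Rightarrow> (bool list \<Rightarrow> bool list) \<Rightarrow> bool list" where
  "w_eps k \<sigma> = (THE w. length w = k \<and> \<sigma> w = [])"

definition f_sigma :: "nat \<Rightarrow> (bool list \<Rightarrow> bool list) \<Rightarrow> real \<Rightarrow> real" where
  "f_sigma k \<sigma> x =
     (if 0 < x \<and> x \<le> 1 \<and> binexp x \<noteq> (\<lambda>n. w_eps k \<sigma> ! (n mod k))
      then bval (subst_inf k \<sigma> (binexp x)) else 0)"

definition optimal :: "nat \<Rightarrow> (bool list \<Rightarrow> bool list) \<Rightarrow> bool" where
  "optimal k \<sigma> \<longleftrightarrow>
     (\<forall>w :: nat \<Rightarrow> bool. \<exists>b :: nat \<Rightarrow> bool list.
        (\<forall>i. length (b i) = k \<and> \<sigma> (b i) \<noteq> []) \<and> w = concat_word (\<lambda>i. \<sigma> (b i)))"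

end

theory Submission
  imports Defs
begin


definition pref :: "(nat \<Rightarrow> bool list) \<Rightarrow> nat \<Rightarrow> bool list" where
  "pref ws m = concat (map ws [0..<m])"

lemma pref_mono: "m \<le> m' \<Longrightarrow> \<exists>t. pref ws m' = pref ws m @ t"
proof -
  assume "m \<le> m'"
  then have "[0..<m'] = [0..<m] @ [m..<m']" by (metis le0 upt_add_eq_append le_add_diff_inverse)
  then show ?thesis unfolding pref_def by auto
qed

lemma cw_nth:
  assumes "n < length (pref ws m)"
  shows "concat_word ws n = pref ws m ! n"
proof -
  have ex: "\<exists>m. n < length (pref ws m)" using assms by blast
  define L where "L = (LEAST m. n < length (pref ws m))"
  have L1: "n < length (pref ws L)" unfolding L_def by (rule LeastI_ex[OF ex])
  have L2: "L \<le> m" unfolding L_def by (rule Least_le) (rule assms)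
  obtain t where t: "pref ws m = pref ws L @ t" using pref_mono[OF L2] by blast
  have "concat_word ws n = pref ws L ! n"
    using ex unfolding concat_word_def L_def pref_def by simp
  also have "\<dots> = pref ws m ! n" using t L1 by (simp add: nth_append)
  finally show ?thesis .
qed

lemma cw_eq:
  assumes "\<And>j. pref ws (3*j) = pref vs j"
  shows "concat_word ws = concat_word vs"
proof
  fix n
  show "concat_word ws n = concat_word vs n"
  proof (cases "\<exists>m. n < length (pref vs m)")
    case True
    then obtain m where m: "n < length (pref vs m)" by blast
    then have m': "n < length (pref ws (3*m))" using assms by simp
    show ?thesis using cw_nth[OF m] cw_nth[OF m'] assms by simp
  next
    case False
    have F2: "\<not> (\<exists>m. n < length (pref ws m))"
    proof
      assume "\<exists>m. n < length (pref ws m)"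
      then obtain m where m: "n < length (pref ws m)" by blast
      obtain t where "pref ws (3*m) = pref ws m @ t" using pref_mono[of m "3*m"] by auto
      then have "n < length (pref vs m)" using m assms by (metis length_append trans_less_add1)
      then show False using False by blast
    qed
    show ?thesis using False F2 unfolding concat_word_def pref_def by simp
  qed
qed



definition dg :: "(nat \<Rightarrow> bool) \<Rightarrow> nat \<Rightarrow> real" where
  "dg u n = (if u n then 1 else 0) / 2 ^ Suc n"

lemma dg_nn: "0 \<le> dg u n"
  by (auto simp: dg_def)

lemma dg_le: "dg u n \<le> (1/2) ^ Suc n"
proof -
  have "dg u n \<le> 1 / 2 ^ Suc n" unfolding dg_def by (auto simp del: power_Suc)
  then show ?thesis by (simp only: power_one_over)
qed

lemma geo_summ: "summable (\<lambda>n. (1/2::real) ^ Suc n)"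
  by (simp add: summable_geometric)

lemma dg_summ: "summable (dg u)"
  by (rule summable_comparison_test[OF _ geo_summ]) (use dg_le dg_nn in auto)

lemma dg_shift: "summable (\<lambda>i. dg u (i + k))"
  using summable_iff_shift[of "dg u" k] dg_summ by simp

lemma bval_dg: "bval u = suminf (dg u)"
  unfolding bval_def dg_def by simp

lemma geo_tail: "(\<Sum>m. (1/2::real) ^ Suc (m + n)) = (1/2)^n"
proof -
  have "(\<lambda>m. (1/2::real) ^ Suc (m + n)) = (\<lambda>m. (1/2)^(Suc n) * (1/2)^m)"
    by (simp add: power_add mult.commute)
  moreover have "(\<Sum>m. (1/2::real)^(Suc n) * (1/2)^m) = (1/2)^(Suc n) * 2"
    by (subst suminf_mult) (auto simp: suminf_geometric summable_geometric)
  ultimately show ?thesis by simp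
qed

lemma bval_le1: "bval u \<le> 1"
proof -
  have "suminf (dg u) \<le> (\<Sum>m. (1/2::real) ^ Suc (m + 0))"
    by (rule suminf_le) (use dg_le dg_summ geo_summ in auto)
  then show ?thesis using geo_tail[of 0] by (simp add: bval_dg)
qed

lemma bval_pos: "u m \<Longrightarrow> 0 < bval u"
  unfolding bval_dg by (rule suminf_pos2[of _ m]) (auto simp: dg_summ dg_nn dg_def)

lemma bval_all_true: "bval (\<lambda>_. True) = 1"
  using geo_tail[of 0] unfolding bval_def by (simp add: power_divide)

lemma bval_less:
  assumes "\<forall>m<n. u m = v m" "u n" "\<not> v n" "\<forall>n. \<exists>m\<ge>n. u m"
  shows "bval v < bval u"
proof -
  obtain m where m: "m \<ge> Suc n" "u m" using assms(4) by blast
  have su: "bval u = (\<Sum>i. dg u (i + Suc n)) + sum (dg u) {..<Suc n}"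
    unfolding bval_dg by (rule suminf_split_initial_segment[OF dg_summ])
  have sv: "bval v = (\<Sum>i. dg v (i + Suc n)) + sum (dg v) {..<Suc n}"
    unfolding bval_dg by (rule suminf_split_initial_segment[OF dg_summ])
  have sum_eq: "sum (dg u) {..<Suc n} = sum (dg v) {..<Suc n} + (1/2)^Suc n"
    using assms(1-3) by (simp add: dg_def power_divide)
  have "0 < (\<Sum>i. dg u (i + Suc n))"
    apply (rule suminf_pos2[of _ "m - Suc n"])
    using m dg_shift[of u "Suc n"] dg_nn[of u] by (auto simp: dg_def)
  moreover have "(\<Sum>i. dg v (i + Suc n)) \<le> (\<Sum>i. (1/2::real) ^ Suc (i + Suc n))"
  proof (rule suminf_le)
    show "\<And>i. dg v (i + Suc n) \<le> (1/2::real) ^ Suc (i + Suc n)" by (rule dg_le)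
    show "summable (\<lambda>i. dg v (i + Suc n))" by (rule dg_shift)
    show "summable (\<lambda>i. (1/2::real) ^ Suc (i + Suc n))"
      using summable_iff_shift[where f="\<lambda>i. (1/2::real) ^ Suc i" and k="Suc n"] geo_summ by simp
  qed
  moreover note geo_tail[of "Suc n"]
  ultimately show ?thesis using su sv sum_eq by simp
qed

lemma bval_inj:
  assumes "\<forall>n. \<exists>m\<ge>n. u m" "\<forall>n. \<exists>m\<ge>n. v m" "bval u = bval v"
  shows "u = v"
proof (rule ccontr)
  assume "u \<noteq> v"
  then have ex: "\<exists>n. u n \<noteq> v n" by auto
  define n where "n = (LEAST n. u n \<noteq> v n)"
  have n1: "u n \<noteq> v n" unfolding n_def by (rule LeastI_ex[OF ex])
  have n2: "\<forall>m<n. u m = v m" unfolding n_def using not_less_Least by blast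
  show False
  proof (cases "u n")
    case True
    then have "bval v < bval u" using bval_less[OF n2 True] n1 assms by auto
    then show False using assms by simp
  next
    case False
    then have "bval u < bval v" using bval_less[of n v u] n2 n1 assms by auto
    then show False using assms by simp
  qed
qed

lemma binexp_bval:
  assumes "\<forall>n. \<exists>m\<ge>n. u m"
  shows "binexp (bval u) = u"
  unfolding binexp_def
  by (rule the_equality) (use assms bval_inj in auto)



lemma floor_step:
  fixes y :: real
  shows "floor (2*y) = 2 * floor y + (if odd (floor (2*y)) then 1 else 0)"
proof -
  have a: "2 * floor y \<le> floor (2*y)"
    by (simp add: le_floor_iff) 
  have b: "floor (2*y) < 2 * floor y + 2"
  proof -
    have "y < real_of_int (floor y) + 1" by linarith
    then have "2*y < 2*real_of_int (floor y) + 2" by linarith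
    also have "\<dots> = real_of_int (2 * floor y + 2)" by simp
    finally have "2*y < real_of_int (2 * floor y + 2)" .
    then show ?thesis by (simp only: floor_less_iff)
  qed
  have "floor (2*y) = 2 * floor y \<or> floor (2*y) = 2 * floor y + 1" using a b by linarith
  then show ?thesis by auto
qed

lemma partial_eq:
  assumes "0 \<le> x" "x < (1::real)"
  shows "(\<Sum>n<N. dg (\<lambda>n. odd (floor (x * 2^Suc n))) n) = floor (x * 2^N) / 2^N"
proof (induction N)
  case 0
  have "floor x = 0" using assms by (simp add: floor_eq_iff)
  then show ?case by simp
next
  case (Suc N)
  have st: "floor (x * 2^Suc N) = 2 * floor (x * 2^N) + (if odd (floor (x * 2^Suc N)) then 1 else 0)"
    using floor_step[of "x * 2^N"] by (simp add: mult.commute mult.left_commute)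
  define F where "F = floor (x * 2^N)"
  define G where "G = floor (x * 2^Suc N)"
  define e :: int where "e = (if odd G then 1 else 0)"
  have st': "G = 2 * F + e" using st unfolding F_def G_def e_def by simp
  have dgN: "dg (\<lambda>n. odd (floor (x * 2^Suc n))) N = real_of_int e / 2^Suc N"
    unfolding dg_def e_def G_def by simp
  have "(\<Sum>n<Suc N. dg (\<lambda>n. odd (floor (x * 2^Suc n))) n) = real_of_int F / 2^N + real_of_int e / 2^Suc N"
    unfolding sum.lessThan_Suc Suc F_def dgN by simp
  also have "\<dots> = real_of_int G / 2^Suc N" unfolding st' by (simp add: field_simps)
  finally show ?case unfolding G_def .
qed

lemma exists_exp:
  assumes "0 \<le> x" "x \<le> (1::real)"
  shows "\<exists>w. bval w = x"
proof (cases "x = 1")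
  case True
  then show ?thesis using bval_all_true by blast
next
  case False
  then have x1: "x < 1" using assms by simp
  define w where "w = (\<lambda>n. odd (floor (x * 2^Suc n)))"
  have "(\<lambda>N. floor (x * 2^N) / 2^N) \<longlonglongrightarrow> x"
  proof (rule tendsto_sandwich[of "\<lambda>N. x - (1/2)^N" _ _ "\<lambda>N. x"])
    show "\<forall>\<^sub>F N in sequentially. x - (1/2)^N \<le> floor (x * 2^N) / 2^N"
    proof (rule always_eventually, rule allI)
      fix N :: nat
      have "x * 2^N - 1 \<le> floor (x * 2^N)" by linarith
      then have "(x * 2^N - 1) / 2^N \<le> floor (x * 2^N) / 2^N" by (simp add: divide_right_mono)
      then show "x - (1/2)^N \<le> floor (x * 2^N) / 2^N" by (simp add: field_simps power_one_over)
    qed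
    show "\<forall>\<^sub>F N in sequentially. floor (x * 2^N) / 2^N \<le> x"
    proof (rule always_eventually, rule allI)
      fix N :: nat
      have "floor (x * 2^N) \<le> x * 2^N" by linarith
      then show "floor (x * 2^N) / 2^N \<le> x" by (simp add: field_simps)
    qed
    show "(\<lambda>N. x) \<longlonglongrightarrow> x" by simp
    have "(\<lambda>N. (1/2::real)^N) \<longlonglongrightarrow> 0" by (rule LIMSEQ_power_zero) simp
    then show "(\<lambda>N. x - (1/2)^N) \<longlonglongrightarrow> x" using tendsto_diff[of "\<lambda>_. x" x sequentially] by fastforce
  qed
  then have "dg w sums x" unfolding sums_def w_def using partial_eq[OF assms(1) x1] by simp
  then have "bval w = x" by (simp add: bval_dg sums_unique[symmetric])
  then show ?thesis by blast
qed

lemma uncountable_fun: "uncountable (UNIV :: (nat \<Rightarrow> bool) set)"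
proof
  assume c: "countable (UNIV :: (nat \<Rightarrow> bool) set)"
  define g where "g = from_nat_into (UNIV :: (nat \<Rightarrow> bool) set)"
  obtain n where "g n = (\<lambda>m. \<not> g m m)" using from_nat_into_surj[OF c] unfolding g_def by blast
  then have "g n n = (\<not> g n n)" by (rule fun_cong)
  then show False by simp
qed



theorem corollary1:
  fixes k :: nat and \<sigma> :: "bool list \<Rightarrow> bool list"
  assumes "erasing_block_subst k \<sigma>"
    and "w_eps k \<sigma> \<noteq> replicate k True"
    and "optimal k \<sigma>"
  shows "\<forall>x\<in>{0..1::real}. uncountable {y\<in>{0..1}. f_sigma k \<sigma> y = x}"
proof
  fix x :: real assume "x \<in> {0..1}"
  then obtain w where bw: "bval w = x" using exists_exp by auto
  obtain b where b: "\<And>i. length (b i) = k" "\<And>i. \<sigma> (b i) \<noteq> []"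
    and wb: "w = concat_word (\<lambda>i. \<sigma> (b i))"
    using assms(3) unfolding optimal_def by blast
  define we where "we = w_eps k \<sigma>"
  have k2: "k \<ge> 2" and ex1: "\<exists>!w. length w = k \<and> \<sigma> w = []"
    using assms(1) unfolding erasing_block_subst_def by auto
  have we: "length we = k \<and> \<sigma> we = []"
    unfolding we_def w_eps_def by (rule theI'[OF ex1])
  have bne: "b i \<noteq> we" for i using b(2) we by auto
  define d where "d c n = (if n mod 3 = (if c (n div 3) then 1 else 0) then b (n div 3) else we)"
    for c :: "nat \<Rightarrow> bool" and n
  define u where "u c m = d c (m div k) ! (m mod k)" for c m
  define Y where "Y c = bval (u c)" for c
  have dlen: "length (d c n) = k" for c n using b(1) we unfolding d_def by auto
  have blk: "block k (u c) i = d c i" for c i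
  proof (rule nth_equalityI)
    show "length (block k (u c) i) = length (d c i)" using dlen by (simp add: block_def)
    fix j assume "j < length (block k (u c) i)"
    then have j: "j < k" by (simp add: block_def)
    have "(k * i + j) div k = i" "(k * i + j) mod k = j" using j by auto
    then show "block k (u c) i ! j = d c i ! j" using j by (simp add: block_def u_def)
  qed
  have uat: "u c (k * i + j) = d c i ! j" if "j < k" for c i j
  proof -
    have "(k * i + j) div k = i" "(k * i + j) mod k = j" using that by auto
    then show ?thesis by (simp add: u_def)
  qed
  have dr: "d c (3 * j + r) = (if r = (if c j then 1 else 0) then b j else we)" if "r < 3" for c j r
  proof -
    have "(3*j+r) mod 3 = r" "(3*j+r) div 3 = j" using that by auto
    then show ?thesis unfolding d_def by simp
  qed
  have dpos: "d c (3 * j + (if c j then 1 else 0)) = b j" for c j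
    using dr[of "if c j then 1 else 0" c j] by simp
  have dwe: "d c (3 * j + 2) = we" for c j
    using dr[of 2 c j] by simp
  have inf: "\<forall>n. \<exists>m\<ge>n. u c m" for c
  proof
    fix n
    show "\<exists>m\<ge>n. u c m"
    proof (cases "\<exists>j<k. we ! j")
      case True
      then obtain j where j: "j < k" "we ! j" by blast
      have "u c (k * (3*n+2) + j) = d c (3*n+2) ! j" by (rule uat[OF j(1)])
      then have "u c (k * (3*n+2) + j) = we ! j" by (simp only: dwe)
      moreover have "n \<le> k * (3*n+2) + j" using k2
        by (metis le_add1 le_trans mult_le_mono1 mult_1 one_le_numeral le_add2 trans_le_add1
            Suc_1 Suc_le_lessD less_imp_le_nat mult.commute nat_mult_le_cancel_disj)
      ultimately show ?thesis using j by metis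
    next
      case False
      have "\<exists>j<k. b n ! j \<noteq> we ! j"
      proof (rule ccontr)
        assume "\<not> ?thesis"
        then have "b n = we" using b(1) we by (auto intro: nth_equalityI)
        then show False using bne by blast
      qed
      then obtain j where j: "j < k" "b n ! j" using False by auto
      define p :: nat where "p = 3 * n + (if c n then 1 else 0)"
      have "u c (k * p + j) = d c p ! j" by (rule uat[OF j(1)])
      then have "u c (k * p + j) = b n ! j" unfolding p_def by (simp only: dpos)
      moreover have "n \<le> k * p + j"
      proof -
        have "n \<le> p" unfolding p_def by simp
        also have "p \<le> k * p" using k2 by simp
        finally show ?thesis by simp
      qed
      ultimately show ?thesis using j by metis
    qed
  qed
  have binY: "binexp (Y c) = u c" for c unfolding Y_def by (rule binexp_bval[OF inf])
  have notper: "u c \<noteq> (\<lambda>n. we ! (n mod k))" for c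
  proof
    assume per: "u c = (\<lambda>n. we ! (n mod k))"
    define p :: nat where "p = 3 * 0 + (if c 0 then 1 else 0)"
    have "d c p = we"
    proof (rule nth_equalityI)
      show "length (d c p) = length we" using dlen we by simp
      fix j assume "j < length (d c p)"
      then have j: "j < k" using dlen by simp
      have "d c p ! j = u c (k * p + j)" using uat[OF j] by simp
      also have "\<dots> = we ! j" using per j by simp
      finally show "d c p ! j = we ! j" .
    qed
    moreover have "d c p = b 0" using dpos[of c 0] unfolding p_def by simp
    ultimately show False using bne by simp
  qed
  have subst: "subst_inf k \<sigma> (u c) = w" for c
  proof -
    have "subst_inf k \<sigma> (u c) = concat_word (\<lambda>i. \<sigma> (d c i))"
      unfolding subst_inf_def blk ..
    also have "\<dots> = concat_word (\<lambda>i. \<sigma> (b i))"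
    proof (rule cw_eq)
      fix j
      show "pref (\<lambda>i. \<sigma> (d c i)) (3 * j) = pref (\<lambda>i. \<sigma> (b i)) j"
      proof (induction j)
        case 0
        then show ?case by (simp add: pref_def)
      next
        case (Suc j)
        have e: "3 * Suc j = 3 * j + 3" by simp
        have d0: "d c (3*j) = (if c j then we else b j)" using dr[of 0 c j] by simp
        have d1: "d c (3*j+1) = (if c j then b j else we)" using dr[of 1 c j] by simp
        have d2: "d c (3*j+2) = we" by (rule dwe)
        have u: "[0..<3*j+3] = [0..<3*j] @ [3*j, Suc (3*j), Suc (Suc (3*j))]"
        proof -
          have "3*j+3 = Suc (Suc (Suc (3*j)))" by simp
          then show ?thesis by (simp only: upt_Suc_append le0 le_SucI append_assoc) simp
        qed
        have "pref (\<lambda>i. \<sigma> (d c i)) (3 * Suc j) = pref (\<lambda>i. \<sigma> (d c i)) (3 * j) @ \<sigma> (d c (3*j)) @ \<sigma> (d c (3*j+1)) @ \<sigma> (d c (3*j+2))"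
          unfolding pref_def e u by simp
        also have "\<dots> = pref (\<lambda>i. \<sigma> (b i)) j @ \<sigma> (b j)"
          unfolding Suc d0 d1 d2 using we by simp
        also have "\<dots> = pref (\<lambda>i. \<sigma> (b i)) (Suc j)" unfolding pref_def by simp
        finally show ?case .
      qed
    qed
    finally show ?thesis using wb by simp
  qed
  have fY: "f_sigma k \<sigma> (Y c) = x" for c
  proof -
    obtain m where "u c m" using inf by blast
    then have "0 < Y c" unfolding Y_def by (rule bval_pos)
    moreover have "Y c \<le> 1" unfolding Y_def by (rule bval_le1)
    ultimately show ?thesis unfolding f_sigma_def binY using notper subst bw we_def by simp
  qed
  have Yin: "Y ` UNIV \<subseteq> {y\<in>{0..1}. f_sigma k \<sigma> y = x}"
  proof
    fix y assume "y \<in> Y ` UNIV"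
    then obtain c where c: "y = Y c" by blast
    obtain m where "u c m" using inf by blast
    then have "0 < Y c" unfolding Y_def by (rule bval_pos)
    moreover have "Y c \<le> 1" unfolding Y_def by (rule bval_le1)
    ultimately show "y \<in> {y\<in>{0..1}. f_sigma k \<sigma> y = x}" using c fY by simp
  qed
  have injY: "inj Y"
  proof
    fix c c' assume "Y c = Y c'"
    then have "u c = u c'" using binY by metis
    then have dd: "d c = d c'" using blk by (metis ext)
    show "c = c'"
    proof
      fix j
      have cj: "c j = (d c (3*j) = we)" for c using bne dr[of 0 c j] by simp
      show "c j = c' j" using cj[of c] cj[of c'] dd by simp
    qed
  qed
  have "uncountable (Y ` UNIV)"
    using uncountable_fun injY by (metis countable_image_inj_on)
  then show "uncountable {y\<in>{0..1}. f_sigma k \<sigma> y = x}"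
    using Yin countable_subset by blast
qed

end
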